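(* Let $z,x,y\in[0,1]$ satisfy $z=x+y$, and write their concise binary expansions as $z=(z_0.z_1z_2\ldots)_2$, $x=(x_0.x_1x_2\ldots)_2$, $y=(y_0.y_1y_2\ldots)_2$. Suppose $\ell\ge 0$ is an index such that $z_\ell=1$ and $z_j=0$ for all $j>\ell$. Then the sequence of bit pairs $(x_j,y_j)_{j\ge \ell}$ satisfies exactly one of the following three patterns: (1) $(x_\ell,y_\ell)\in\{(0,1),(1,0)\}$ and $(x_j,y_j)=(0,0)$ for all $j>\ell$; (2) $(x_\ell,y_\ell)\in\{(0,0),(1,1)\}$, and there is an integer $k\ge 0$ such that $(x_j,y_j)\in\{(0,1),(1,0)\}$ for $\ell<j\le \ell+k$, $(x_{\ell+k+1},y_{\ell+k+1})=(1,1)$, and $(x_j,y_j)=(0,0)$ for all $j>\ell+k+1$; (3) $(x_\ell,y_\ell)\in\{(0,0),(1,1)\}$ and $(x_j,y_j)\in\{(0,1),(1,0)\}$ for all $j>\ell$.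
   Context: A concise binary expansion of a real number is a binary representation $(z_0.z_1z_2\ldots)_2=\sum_{i\ge0} z_i2^{-i}$ with $z_i\in\{0,1\}$ that does not end in an infinite string of 1s. *)

theory Defs
  imports Complex_Main
begin

definition concise_binary_expansion :: "(nat \<Rightarrow> nat) \<Rightarrow> real \<Rightarrow> bool" where
  "concise_binary_expansion d r \<longleftrightarrow>
     (\<forall>i. d i \<in> {0, 1}) \<and>
     (\<lambda>i. real (d i) / 2 ^ i) sums r \<and>
     \<not> (\<exists>N. \<forall>i\<ge>N. d i = 1)"

end

theory Submission
  imports Defs
begin

definition R :: "(nat \<Rightarrow> nat) \<Rightarrow> nat \<Rightarrow> real" where
  "R d n = (\<Sum>i. real (d (n+1+i)) / 2^(i+1))"

fun I :: "(nat \<Rightarrow> nat) \<Rightarrow> nat \<Rightarrow> nat" where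
  "I d 0 = d 0"
| "I d (Suc n) = 2 * I d n + d (Suc n)"

lemma R_summable:
  assumes dig: "\<And>i. d i \<le> 1"
  shows "summable (\<lambda>i. real (d (n+1+i)) / 2^(i+1))"
proof (rule summable_comparison_test[OF _ sums_summable[OF power_half_series]])
  show "\<exists>N. \<forall>i\<ge>N. norm (real (d (n+1+i)) / 2^(i+1)) \<le> (1/2::real)^Suc i"
    using dig by (auto simp: power_divide divide_right_mono)
qed

lemma R_bounds:
  assumes dig: "\<And>i. d i \<le> 1"
  shows "0 \<le> R d n" "R d n \<le> 1"
proof -
  show "0 \<le> R d n" unfolding R_def
    by (rule suminf_nonneg[OF R_summable[where d=d, OF dig]]) simp
  have "R d n \<le> (\<Sum>i. (1/2::real)^Suc i)" unfolding R_def
    by (rule suminf_le[OF _ R_summable[where d=d, OF dig] sums_summable[OF power_half_series]])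
       (use dig in \<open>auto simp: power_divide divide_right_mono\<close>)
  then show "R d n \<le> 1" using power_half_series sums_unique by metis
qed

lemma R_step:
  assumes dig: "\<And>i. d i \<le> 1"
  shows "R d n = (real (d (n+1)) + R d (n+1)) / 2"
proof -
  have s: "summable (\<lambda>i. real (d (n+1+i)) / 2^(i+1))" by (rule R_summable[where d=d, OF dig])
  have "(\<Sum>i. real (d (n+1+Suc i)) / 2^(Suc i+1)) = R d n - real (d (n+1)) / 2"
    unfolding R_def using suminf_split_head[OF s] by simp
  moreover have "(\<Sum>i. real (d (n+1+Suc i)) / 2^(Suc i+1)) = (\<Sum>i. real (d (n+1+1+i)) / 2^(i+1)) / 2"
    using suminf_divide[OF R_summable[where d=d, OF dig, of "n+1"], of 2]
    by (simp add: algebra_simps)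
  ultimately show ?thesis unfolding R_def by (simp add: field_simps)
qed

lemma R_zero:
  assumes dig: "\<And>i. d i \<le> 1" and "R d n = 0"
  shows "\<forall>i>n. d i = 0"
proof -
  have "\<forall>i. real (d (n+1+i)) / 2^(i+1) = 0"
    using assms(2) suminf_eq_zero_iff[OF R_summable[where d=d, OF dig]] unfolding R_def by simp
  then have "\<forall>i. d (n+1+i) = 0" by simp
  then show ?thesis by (metis Suc_eq_plus1 add_Suc less_iff_Suc_add)
qed

lemma R_less1:
  assumes dig: "\<And>i. d i \<le> 1" and ne: "\<not> (\<exists>N. \<forall>i\<ge>N. d i = 1)"
  shows "R d n < 1"
proof (rule ccontr)
  assume "\<not> R d n < 1"
  then have h: "R d n = 1" using R_bounds[where d=d and n=n, OF dig] by linarith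
  have "\<forall>k. R d (n+k) = 1 \<and> d (n+1+k) = 1"
  proof
    fix k show "R d (n+k) = 1 \<and> d (n+1+k) = 1"
    proof (induction k)
      case 0
      have "real (d (n+1)) \<le> 1" "R d (n+1) \<le> 1" using dig[of "n+1"] R_bounds[where d=d, OF dig] by auto
      then show ?case using h R_step[where d=d, OF dig, of n] dig[of "n+1"] by simp
    next
      case (Suc k)
      have e: "R d (n+Suc k) = 1" using Suc R_step[where d=d, OF dig, of "n+k"] by simp
      have "real (d (n+Suc k+1)) \<le> 1" "R d (n+Suc k+1) \<le> 1" using dig[of "n+Suc k+1"] R_bounds[where d=d, OF dig] by auto
      then show ?case using e R_step[where d=d, OF dig, of "n+Suc k"] by simp
    qed
  qed
  then have "\<forall>i\<ge>n+1. d i = 1" by (metis le_add_diff_inverse)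
  then show False using ne by blast
qed

lemma I_R:
  assumes dig: "\<And>i. d i \<le> 1" and s: "(\<lambda>i. real (d i) / 2 ^ i) sums r"
  shows "2^n * r = real (I d n) + R d n"
proof (induction n)
  case 0
  have sm: "summable (\<lambda>i. real (d i) / 2 ^ i)" using s by (rule sums_summable)
  have "(\<Sum>i. real (d (Suc i)) / 2 ^ Suc i) = r - real (d 0)"
    using suminf_split_head[OF sm] sums_unique[OF s] by simp
  then show ?case unfolding R_def by simp
next
  case (Suc n)
  have "2^Suc n * r = 2*(2^n*r)" by simp
  then show ?case using Suc.IH R_step[where d=d and n=n, OF dig] by simp
qed

lemma I_parity:
  assumes dig: "\<And>i. d i \<le> 1"
  shows "I d n mod 2 = d n"
  using dig[of n] by (cases n) auto

lemma conc_facts: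
  assumes "concise_binary_expansion d r"
  shows "\<And>i. d i \<le> 1" "(\<lambda>i. real (d i) / 2 ^ i) sums r" "\<not> (\<exists>N. \<forall>i\<ge>N. d i = 1)"
proof -
  show "\<And>i. d i \<le> 1" using assms unfolding concise_binary_expansion_def
    by (metis insert_iff le_numeral_extra(4) less_one linorder_not_le singletonD zero_le)
  show "(\<lambda>i. real (d i) / 2 ^ i) sums r" "\<not> (\<exists>N. \<forall>i\<ge>N. d i = 1)"
    using assms unfolding concise_binary_expansion_def by auto
qed

lemma combine3: "P1 \<or> P2 \<or> P3 \<Longrightarrow> (P1 \<Longrightarrow> \<not>P2) \<Longrightarrow> (P1 \<Longrightarrow> \<not>P3) \<Longrightarrow> (P2 \<Longrightarrow> \<not>P3)
  \<Longrightarrow> (P1 \<and> \<not> P2 \<and> \<not> P3) \<or> (\<not> P1 \<and> P2 \<and> \<not> P3) \<or> (\<not> P1 \<and> \<not> P2 \<and> P3)"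
  by blast

theorem theorem4p2:
  fixes x y z :: real and xd yd zd :: "nat \<Rightarrow> nat" and l :: nat
  assumes "x \<in> {0..1}" "y \<in> {0..1}" "z \<in> {0..1}" "z = x + y"
    and "concise_binary_expansion zd z"
    and "concise_binary_expansion xd x"
    and "concise_binary_expansion yd y"
    and "zd l = 1" "\<forall>j>l. zd j = 0"
  shows "let
      P1 = ((xd l, yd l) \<in> {(0, 1), (1, 0)} \<and> (\<forall>j>l. (xd j, yd j) = (0, 0)));
      P2 = ((xd l, yd l) \<in> {(0, 0), (1, 1)} \<and>
            (\<exists>k::nat. (\<forall>j. l < j \<and> j \<le> l + k \<longrightarrow> (xd j, yd j) \<in> {(0, 1), (1, 0)}) \<and>
                     (xd (l + k + 1), yd (l + k + 1)) = (1, 1) \<and>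
                     (\<forall>j>l + k + 1. (xd j, yd j) = (0, 0))));
      P3 = ((xd l, yd l) \<in> {(0, 0), (1, 1)} \<and> (\<forall>j>l. (xd j, yd j) \<in> {(0, 1), (1, 0)}))
    in (P1 \<and> \<not> P2 \<and> \<not> P3) \<or> (\<not> P1 \<and> P2 \<and> \<not> P3) \<or> (\<not> P1 \<and> \<not> P2 \<and> P3)"
proof -
  note fz = conc_facts[OF assms(5)] and fx = conc_facts[OF assms(6)] and fy = conc_facts[OF assms(7)]
  have dx: "\<And>i. xd i \<le> 1" by (rule fx(1))
  have dy: "\<And>i. yd i \<le> 1" by (rule fy(1))
  have dz: "\<And>i. zd i \<le> 1" by (rule fz(1))
  have x01: "xd j = 0 \<or> xd j = 1" for j using dx[of j] by auto
  have y01: "yd j = 0 \<or> yd j = 1" for j using dy[of j] by auto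
  have pair01: "((xd j, yd j) \<in> {(0, 1), (1, 0)}) = (xd j + yd j = 1)" for j
    using x01[of j] y01[of j] by auto
  have pair00: "((xd j, yd j) \<in> {(0, 0), (1, 1)}) = (xd j = yd j)" for j
    using x01[of j] y01[of j] by auto
  have zR: "R zd l = 0" unfolding R_def using assms(9) by simp
  have ex: "2^l * x = real (I xd l) + R xd l" by (rule I_R[where d=xd, OF dx fx(2)])
  have ey: "2^l * y = real (I yd l) + R yd l" by (rule I_R[where d=yd, OF dy fy(2)])
  have ez: "2^l * z = real (I zd l) + R zd l" by (rule I_R[where d=zd, OF dz fz(2)])
  have "2^l * z = 2^l * x + 2^l * y" using assms(4) by (simp add: algebra_simps)
  then have eq: "R xd l + R yd l = real_of_int (int (I zd l) - int (I xd l) - int (I yd l))"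
    using ex ey ez zR by simp
  define c where "c = int (I zd l) - int (I xd l) - int (I yd l)"
  have a0: "0 \<le> R xd n" "R xd n < 1" for n
    using R_bounds[where d=xd, OF dx] R_less1[where d=xd, OF dx fx(3)] by auto
  have b0: "0 \<le> R yd n" "R yd n < 1" for n
    using R_bounds[where d=yd, OF dy] R_less1[where d=yd, OF dy fy(3)] by auto
  have "0 \<le> real_of_int c" "real_of_int c < 2" using eq a0[of l] b0[of l] unfolding c_def by linarith+
  then have "c = 0 \<or> c = 1" by linarith
  have px: "I xd l mod 2 = xd l" by (rule I_parity[where d=xd, OF dx])
  have py: "I yd l mod 2 = yd l" by (rule I_parity[where d=yd, OF dy])
  have pz: "I zd l mod 2 = 1" using I_parity[where d=zd, OF dz, of l] assms(8) by simp
  have step: "(xd (n+1) + yd (n+1) = 1 \<and> R xd (n+1) + R yd (n+1) = 1) \<or>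
              (xd (n+1) = 1 \<and> yd (n+1) = 1 \<and> R xd (n+1) + R yd (n+1) = 0)"
    if "R xd n + R yd n = 1" for n
  proof -
    have e1: "R xd n * 2 = real (xd (n+1)) + R xd (n+1)" using R_step[where d=xd and n=n, OF dx] by simp
    have e2: "R yd n * 2 = real (yd (n+1)) + R yd (n+1)" using R_step[where d=yd and n=n, OF dy] by simp
    have "(2::real) = real (xd (n+1)) + real (yd (n+1)) + R xd (n+1) + R yd (n+1)"
      using that e1 e2 by linarith
    then show ?thesis using a0[of "n+1"] b0[of "n+1"] x01[of "n+1"] y01[of "n+1"]
      by (elim disjE) auto
  qed
  define P1 where "P1 = ((xd l, yd l) \<in> {(0, 1), (1, 0)} \<and> (\<forall>j>l. (xd j, yd j) = (0, 0)))"
  define P2 where "P2 = ((xd l, yd l) \<in> {(0, 0), (1, 1)} \<and>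
            (\<exists>k::nat. (\<forall>j. l < j \<and> j \<le> l + k \<longrightarrow> (xd j, yd j) \<in> {(0, 1), (1, 0)}) \<and>
                     (xd (l + k + 1), yd (l + k + 1)) = (1, 1) \<and>
                     (\<forall>j>l + k + 1. (xd j, yd j) = (0, 0))))"
  define P3 where "P3 = ((xd l, yd l) \<in> {(0, 0), (1, 1)} \<and> (\<forall>j>l. (xd j, yd j) \<in> {(0, 1), (1, 0)}))"
  have "P1 \<or> P2 \<or> P3"
  proof (cases "c = 0")
    case True
    then have "R xd l = 0" "R yd l = 0" using eq a0[of l] b0[of l] unfolding c_def by linarith+
    then have t: "\<forall>j>l. xd j = 0" "\<forall>j>l. yd j = 0"
      using R_zero[where d=xd, OF dx] R_zero[where d=yd, OF dy] by auto
    have "I zd l = I xd l + I yd l" using True unfolding c_def by linarith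
    then have "(xd l + yd l) mod 2 = 1" using px py pz by (metis mod_add_eq)
    then have "xd l + yd l = 1" using dx[of l] dy[of l] using x01[of l] y01[of l] by (elim disjE) auto
    then have P1 unfolding P1_def using pair01 t by simp
    then show ?thesis by simp
  next
    case False
    then have c1: "c = 1" using \<open>c = 0 \<or> c = 1\<close> by simp
    have s1: "R xd l + R yd l = 1" using eq c1 unfolding c_def by simp
    have "I zd l = I xd l + I yd l + 1" using c1 unfolding c_def by linarith
    then have "(xd l + yd l + 1) mod 2 = 1" using px py pz by (metis mod_add_eq)
    then have hl: "xd l = yd l" using dx[of l] dy[of l] using x01[of l] y01[of l] by (elim disjE) auto
    have Q: "P2 \<or> ((\<forall>j. l < j \<and> j \<le> l + k \<longrightarrow> xd j + yd j = 1) \<and> R xd (l+k) + R yd (l+k) = 1)" for k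
    proof (induction k)
      case 0
      then show ?case using s1 by auto
    next
      case (Suc k)
      show ?case
      proof (cases P2)
        case False
        then have ih: "\<forall>j. l < j \<and> j \<le> l + k \<longrightarrow> xd j + yd j = 1" "R xd (l+k) + R yd (l+k) = 1"
          using Suc by auto
        from step[OF ih(2)] show ?thesis
        proof
          assume h: "xd (l+k+1) + yd (l+k+1) = 1 \<and> R xd (l+k+1) + R yd (l+k+1) = 1"
          have "\<forall>j. l < j \<and> j \<le> l + Suc k \<longrightarrow> xd j + yd j = 1"
            using ih(1) h by (metis add_Suc_right le_Suc_eq Suc_eq_plus1)
          then show ?thesis using h by simp
        next
          assume h: "xd (l+k+1) = 1 \<and> yd (l+k+1) = 1 \<and> R xd (l+k+1) + R yd (l+k+1) = 0"
          then have "R xd (l+k+1) = 0" "R yd (l+k+1) = 0" using a0 b0 by (smt (verit))+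
          then have t: "\<forall>j>l+k+1. xd j = 0" "\<forall>j>l+k+1. yd j = 0"
            using R_zero[where d=xd, OF dx] R_zero[where d=yd, OF dy] by auto
          have P2 unfolding P2_def
            apply (rule conjI)
            using hl pair00[of l] apply simp
            apply (rule exI[of _ k])
            using ih(1) pair01 h t by simp
          then show ?thesis by simp
        qed
      qed simp
    qed
    show ?thesis
    proof (cases P2)
      case False
      have "\<forall>j>l. xd j + yd j = 1"
      proof (intro allI impI)
        fix j assume "l < j"
        then show "xd j + yd j = 1" using Q[of "j - l"] False by auto
      qed
      then have P3 unfolding P3_def using pair01 pair00[of l] hl by simp
      then show ?thesis by simp
    qed simp
  qed
  moreover have "P1 \<Longrightarrow> \<not>P2" "P1 \<Longrightarrow> \<not>P3" unfolding P1_def P2_def P3_def by auto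
  moreover have "\<not>P3" if "P2"
  proof
    assume P3
    from that obtain k where "(xd (l + k + 1), yd (l + k + 1)) = (1, 1)" unfolding P2_def by blast
    moreover have "(xd (l + k + 1), yd (l + k + 1)) \<in> {(0, 1), (1, 0)}" using \<open>P3\<close> unfolding P3_def by simp
    ultimately show False by simp
  qed
  ultimately show ?thesis unfolding Let_def P1_def[symmetric] P2_def[symmetric] P3_def[symmetric]
    by (rule combine3)
qed

end
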